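(* In a distributive quasi-orthomodular nearsemilattice $A$, every initial segment $[0,p] = \{x \in A : x \le p\}$ is a Boolean algebra.
   Context: A nearsemilattice is a poset $A$ with least element $0$ in which any two elements having a common upper bound have a join $x \vee y$ (a partial operation). It is distributive if whenever $y \vee z$ exists and $x \le y \vee z$, then $x = y' \vee z'$ for some $y' \le y$ and $z' \le z$. An orthogonality on $A$ is a binary relation $\perp$ with: $x \perp y$ implies $y \perp x$; $x \le y$ and $y \perp z$ imply $x \perp z$; $x \perp 0$ for all $x$. A quasi-orthomodular nearsemilattice is a nearsemilattice with an orthogonality such that: (a) if $x \perp y$ then $x \vee y$ exists; (b) if $x \le y$ then $y = x \vee z$ for some $z$ with $x \perp z$; (c) if $x \perp y$, $x \perp z$ and $y \le x \vee z$, then $y \le z$. *)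

theory Defs
  imports Main
begin

text \<open>The poset A is modelled as a type of class order_bot; its least element 0 is bot.\<close>

definition is_join :: "'a::order \<Rightarrow> 'a \<Rightarrow> 'a \<Rightarrow> bool" where
  "is_join x y j \<longleftrightarrow> x \<le> j \<and> y \<le> j \<and> (\<forall>u. x \<le> u \<and> y \<le> u \<longrightarrow> j \<le> u)"

definition nearsemilattice :: "'a::order_bot itself \<Rightarrow> bool" where
  "nearsemilattice _ \<longleftrightarrow>
     (\<forall>x y::'a. (\<exists>u. x \<le> u \<and> y \<le> u) \<longrightarrow> (\<exists>j. is_join x y j))"

definition distributive_ns :: "'a::order_bot itself \<Rightarrow> bool" where
  "distributive_ns _ \<longleftrightarrow>
     (\<forall>x y z w::'a. is_join y z w \<and> x \<le> w \<longrightarrow>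
        (\<exists>y' z'. y' \<le> y \<and> z' \<le> z \<and> is_join y' z' x))"

definition orthogonality :: "('a::order_bot \<Rightarrow> 'a \<Rightarrow> bool) \<Rightarrow> bool" where
  "orthogonality orth \<longleftrightarrow>
     (\<forall>x y. orth x y \<longrightarrow> orth y x) \<and>
     (\<forall>x y z. x \<le> y \<and> orth y z \<longrightarrow> orth x z) \<and>
     (\<forall>x. orth x bot)"

definition quasi_orthomodular :: "('a::order_bot \<Rightarrow> 'a \<Rightarrow> bool) \<Rightarrow> bool" where
  "quasi_orthomodular orth \<longleftrightarrow>
     nearsemilattice TYPE('a) \<and> orthogonality orth \<and>
     (\<forall>x y. orth x y \<longrightarrow> (\<exists>j. is_join x y j)) \<and>
     (\<forall>x y. x \<le> y \<longrightarrow> (\<exists>z. orth x z \<and> is_join x z y)) \<and>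
     (\<forall>x y z w. orth x y \<and> orth x z \<and> is_join x z w \<and> y \<le> w \<longrightarrow> y \<le> z)"

definition boolean_algebra_on :: "'a::order set \<Rightarrow> bool" where
  "boolean_algebra_on S \<longleftrightarrow>
     (\<exists>b t sp nf.
        b \<in> S \<and> t \<in> S \<and> (\<forall>x\<in>S. b \<le> x \<and> x \<le> t) \<and>
        (\<forall>x\<in>S. \<forall>y\<in>S. sp x y \<in> S \<and> x \<le> sp x y \<and> y \<le> sp x y \<and>
                    (\<forall>u\<in>S. x \<le> u \<and> y \<le> u \<longrightarrow> sp x y \<le> u)) \<and>
        (\<forall>x\<in>S. \<forall>y\<in>S. nf x y \<in> S \<and> nf x y \<le> x \<and> nf x y \<le> y \<and>
                    (\<forall>u\<in>S. u \<le> x \<and> u \<le> y \<longrightarrow> u \<le> nf x y)) \<and>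
        (\<forall>x\<in>S. \<forall>y\<in>S. \<forall>z\<in>S. nf x (sp y z) = sp (nf x y) (nf x z)) \<and>
        (\<forall>x\<in>S. \<exists>y\<in>S. sp x y = t \<and> nf x y = b))"

end

theory Submission
  imports Defs
begin

lemma join_unique: "is_join x y j \<Longrightarrow> is_join x y j' \<Longrightarrow> j = j'"
  unfolding is_join_def by (meson order.antisym)

lemma join_bot: "is_join (u::'a::order_bot) bot u"
  unfolding is_join_def by auto

theorem corollary5:
  fixes orth :: "'a::order_bot \<Rightarrow> 'a \<Rightarrow> bool" and p :: 'a
  assumes "nearsemilattice TYPE('a)"
    and "distributive_ns TYPE('a)"
    and "quasi_orthomodular orth"
  shows "boolean_algebra_on {x. bot \<le> x \<and> x \<le> p}"
proof -
  define S where "S = {x. bot \<le> x \<and> x \<le> p}"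
  have NS: "\<And>x y::'a. (\<exists>u. x \<le> u \<and> y \<le> u) \<Longrightarrow> \<exists>j. is_join x y j"
    using assms(1) unfolding nearsemilattice_def by blast
  have DI: "\<And>x y z w::'a. is_join y z w \<Longrightarrow> x \<le> w \<Longrightarrow>
        \<exists>y' z'. y' \<le> y \<and> z' \<le> z \<and> is_join y' z' x"
    using assms(2) unfolding distributive_ns_def by blast
  have Q: "orthogonality orth"
    "\<And>x y. x \<le> y \<Longrightarrow> \<exists>z. orth x z \<and> is_join x z y"
    "\<And>x y z w. orth x y \<Longrightarrow> orth x z \<Longrightarrow> is_join x z w \<Longrightarrow> y \<le> w \<Longrightarrow> y \<le> z"
    using assms(3) unfolding quasi_orthomodular_def by blast+
  have sym: "\<And>x y. orth x y \<Longrightarrow> orth y x" and down: "\<And>x y z. x \<le> y \<Longrightarrow> orth y z \<Longrightarrow> orth x z"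
    using Q(1) unfolding orthogonality_def by blast+
  have obot: "\<And>x. orth x bot" using Q(1) unfolding orthogonality_def by blast
  have orthz: "u = bot" if "orth x z" "u \<le> x" "u \<le> z" for x z u
  proof -
    have "orth u z" using down that by blast
    hence "orth z u" by (rule sym)
    hence "orth u u" using down that by blast
    hence "u \<le> bot" using Q(3)[OF _ obot join_bot] by blast
    thus ?thesis by (simp add: bot_unique)
  qed
  define J where "J x y = (THE j. is_join x y j)" for x y :: 'a
  have Jj: "is_join x y (J x y)" if "x \<in> S" "y \<in> S" for x y
  proof -
    have "\<exists>u. x \<le> u \<and> y \<le> u" using that unfolding S_def by blast
    then obtain j where j: "is_join x y j" using NS[of x y] by blast
    thus ?thesis unfolding J_def using the_equality[of "is_join x y" j] join_unique by metis
  qed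
  have JS: "J x y \<in> S" if "x \<in> S" "y \<in> S" for x y
    using Jj[OF that] that unfolding S_def is_join_def by auto
  define glb where "glb x y m \<longleftrightarrow> m \<in> S \<and> m \<le> x \<and> m \<le> y \<and> (\<forall>u\<in>S. u\<le>x \<and> u\<le>y \<longrightarrow> u \<le> m)" for x y m
  define M where "M x y = (SOME m. glb x y m)" for x y
  have glb_ex: "\<exists>m. glb x y m" if xyS: "x \<in> S" "y \<in> S" for x y
  proof -
    obtain y' where y': "orth y y'" "is_join y y' p" using Q(2)[of y p] xyS unfolding S_def by auto
    obtain a b where ab: "a \<le> y" "b \<le> y'" "is_join a b x" using DI[OF y'(2), of x] xyS unfolding S_def by auto
    have "glb x y a"
      unfolding glb_def
    proof (intro conjI ballI impI)
      show "a \<le> x" "a \<le> y" using ab unfolding is_join_def by auto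
      thus "a \<in> S" using xyS unfolding S_def by auto
      fix u assume u: "u \<in> S" "u \<le> x \<and> u \<le> y"
      obtain c d where cd: "c \<le> a" "d \<le> b" "is_join c d u" using DI[OF ab(3), of u] u by auto
      have "d \<le> u" using cd unfolding is_join_def by auto
      hence "d = bot" using orthz[OF y'(1), of d] u cd(2) ab(2) by auto
      hence "u \<le> c" using cd(3) unfolding is_join_def by auto
      thus "u \<le> a" using cd(1) by auto
    qed
    thus ?thesis by blast
  qed
  have Mg: "glb x y (M x y)" if "x \<in> S" "y \<in> S" for x y
    unfolding M_def using glb_ex[OF that] by (rule someI_ex)
  show ?thesis unfolding boolean_algebra_on_def S_def[symmetric]
  apply (rule exI[of _ bot], rule exI[of _ p], rule exI[of _ J], rule exI[of _ M])
  proof (intro conjI ballI)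
    show "bot \<in> S" "p \<in> S" unfolding S_def by auto
    fix x assume x: "x \<in> S"
    show "bot \<le> x" "x \<le> p" using x unfolding S_def by auto
    {
      fix y assume y: "y \<in> S"
      show "J x y \<in> S" "x \<le> J x y" "y \<le> J x y"
        using JS[OF x y] Jj[OF x y] unfolding is_join_def by auto
      show "x \<le> u \<and> y \<le> u \<longrightarrow> J x y \<le> u" if "u \<in> S" for u
        using Jj[OF x y] unfolding is_join_def by auto
      show "M x y \<in> S" "M x y \<le> x" "M x y \<le> y"
        using Mg[OF x y] unfolding glb_def by auto
      show "u \<le> x \<and> u \<le> y \<longrightarrow> u \<le> M x y" if "u \<in> S" for u
        using Mg[OF x y] that unfolding glb_def by auto
      fix z assume z: "z \<in> S"
      let ?w = "M x (J y z)"
      have yz: "J y z \<in> S" "is_join y z (J y z)" using JS Jj y z by auto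
      have w: "glb x (J y z) ?w" using Mg[OF x yz(1)] .
      have mxy: "glb x y (M x y)" "glb x z (M x z)" using Mg x y z by auto
      have mS: "M x y \<in> S" "M x z \<in> S" using mxy unfolding glb_def by auto
      have jj: "is_join (M x y) (M x z) (J (M x y) (M x z))" using Jj[OF mS] .
      have jS: "J (M x y) (M x z) \<in> S" using JS[OF mS] .
      obtain y' z' where yz': "y' \<le> y" "z' \<le> z" "is_join y' z' ?w"
        using DI[OF yz(2), of ?w] w unfolding glb_def by auto
      have "y' \<le> x" "z' \<le> x" using yz'(3) w unfolding is_join_def glb_def by (auto intro: order.trans)
      moreover have "y' \<in> S" "z' \<in> S" using yz' y z unfolding S_def by auto
      ultimately have "y' \<le> M x y" "z' \<le> M x z" using mxy yz' unfolding glb_def by auto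
      hence le1: "?w \<le> J (M x y) (M x z)" using yz'(3) jj unfolding is_join_def
        by (meson order.trans)
      have "M x y \<le> J y z" "M x z \<le> J y z" using mxy yz(2) unfolding glb_def is_join_def
        by (auto intro: order.trans)
      hence "J (M x y) (M x z) \<le> J y z" using jj unfolding is_join_def by auto
      moreover have "J (M x y) (M x z) \<le> x" using jj mxy unfolding is_join_def glb_def by auto
      ultimately have "J (M x y) (M x z) \<le> ?w" using w jS unfolding glb_def by auto
      thus "M x (J y z) = J (M x y) (M x z)" using le1 by auto
    }
    obtain z where z: "orth x z" "is_join x z p" using Q(2)[of x p] x unfolding S_def by auto
    have zS: "z \<in> S" using z unfolding S_def is_join_def by auto
    show "\<exists>y\<in>S. J x y = p \<and> M x y = bot"
    proof (intro bexI[OF _ zS] conjI)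
      show "J x z = p" using join_unique[OF Jj[OF x zS] z(2)] .
      show "M x z = bot" using orthz[OF z(1)] Mg[OF x zS] unfolding glb_def by auto
    qed
  qed
qed

end
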